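(* Let $A$ be a finite set with $|A|\ge 2$ and $n\ge 2$. If $X\subset\mathrm{Sym}(A^n)$ is a set of $n$ instructions which generates $\mathrm{Sym}(A^n)$, then $X$ contains no unary instruction.
   Context: Any $f\in\mathrm{Sym}(A^n)$ is written $f(x)=(f_1(x),\ldots,f_n(x))$ with coordinate functions $f_i:A^n\to A$; the $i$-th coordinate function is trivial if $f_i(x)=x_i$ for all $x$. An instruction is a permutation of $A^n$ with at most one nontrivial coordinate function (the identity counts as an instruction). A unary instruction is an instruction all of whose coordinate functions depend on at most one variable, i.e. it has the form $x\mapsto(x_1,\ldots,x_{j-1},h(x_j),x_{j+1},\ldots,x_n)$ with $h\in\mathrm{Sym}(A)$. *)

theory Defs
  imports "HOL-Algebra.Algebra"
begin

text \<open>A^n, with A = UNIV of a finite type, realised as lists of length n.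
  Coordinate i of x is x ! i (0-based).\<close>
definition words :: "nat \<Rightarrow> 'a list set" where
  "words n = {xs. length xs = n}"

text \<open>Sym(A^n) is BijGroup (words n); its carrier is Bij (words n).\<close>

definition instruction :: "nat \<Rightarrow> ('a list \<Rightarrow> 'a list) \<Rightarrow> bool" where
  "instruction n f \<longleftrightarrow> f \<in> Bij (words n) \<and>
     (\<exists>j<n. \<forall>i<n. i \<noteq> j \<longrightarrow> (\<forall>x\<in>words n. f x ! i = x ! i))"

definition unary_instruction :: "nat \<Rightarrow> ('a list \<Rightarrow> 'a list) \<Rightarrow> bool" where
  "unary_instruction n f \<longleftrightarrow> f \<in> Bij (words n) \<and>
     (\<exists>j<n. \<exists>h::'a \<Rightarrow> 'a. bij h \<and> (\<forall>x\<in>words n. f x = x[j := h (x ! j)]))"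

end

theory Submission
  imports Defs
begin

definition depj :: "nat \<Rightarrow> nat \<Rightarrow> ('a list \<Rightarrow> 'a list) \<Rightarrow> bool" where
  "depj n j g \<longleftrightarrow> (\<exists>\<phi>. \<forall>x\<in>words n. g x ! j = \<phi> (x ! j))"

definition fixc :: "nat \<Rightarrow> nat \<Rightarrow> ('a list \<Rightarrow> 'a list) \<Rightarrow> bool" where
  "fixc n k g \<longleftrightarrow> (\<forall>x\<in>words n. g x ! k = x ! k)"

lemma gen_dep:
  fixes I :: "('a list \<Rightarrow> 'a list) set"
  assumes "I \<subseteq> Bij (words n)"
    and "\<forall>g\<in>I. depj n j g \<and> depj n j (inv\<^bsub>BijGroup (words n)\<^esub> g)"
    and "g \<in> generate (BijGroup (words n)) I"
  shows "depj n j g"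
  using assms(3)
proof (induction g rule: generate.induct)
  case one
  show ?case unfolding depj_def by (rule exI[of _ id]) (simp add: BijGroup_def)
next
  case (incl h) then show ?case using assms(2) by auto
next
  case (inv h) then show ?case using assms(2) by auto
next
  case (eng h1 h2)
  have c: "generate (BijGroup (words n)) I \<subseteq> Bij (words n)"
    using group.generate_incl[OF group_BijGroup, of I "words n"] assms(1)
    by (simp add: BijGroup_def)
  have b1: "h1 \<in> Bij (words n)" and b2: "h2 \<in> Bij (words n)" using eng c by auto
  obtain \<phi>1 where p1: "\<forall>x\<in>words n. h1 x ! j = \<phi>1 (x ! j)" using eng unfolding depj_def by auto
  obtain \<phi>2 where p2: "\<forall>x\<in>words n. h2 x ! j = \<phi>2 (x ! j)" using eng unfolding depj_def by auto
  have m: "h1 \<otimes>\<^bsub>BijGroup (words n)\<^esub> h2 = compose (words n) h1 h2"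
    using b1 b2 by (simp add: BijGroup_def)
  have "\<forall>x\<in>words n. compose (words n) h1 h2 x ! j = (\<phi>1 \<circ> \<phi>2) (x ! j)"
  proof
    fix x :: "'a list" assume x: "x \<in> words n"
    have "h2 x \<in> words n" using b2 x Bij_imp_funcset by blast
    then show "compose (words n) h1 h2 x ! j = (\<phi>1 \<circ> \<phi>2) (x ! j)"
      using x p1 p2 by (simp add: compose_def)
  qed
  then show ?case unfolding depj_def m by blast
qed

lemma inv_fix:
  fixes g :: "'a list \<Rightarrow> 'a list"
  assumes "g \<in> Bij (words n)" "fixc n k g"
  shows "fixc n k (inv\<^bsub>BijGroup (words n)\<^esub> g)"
  unfolding fixc_def
proof
  fix y :: "'a list" assume y: "y \<in> words n"
  have bb: "bij_betw g (words n) (words n)" using assms(1) by (simp add: Bij_def)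
  have "(inv\<^bsub>BijGroup (words n)\<^esub> g) y = inv_into (words n) g y"
    using assms(1) y by (simp add: inv_BijGroup)
  moreover have "inv_into (words n) g y \<in> words n"
    using assms(1) y by (simp add: Bij_inv_into_mem)
  moreover have "g (inv_into (words n) g y) = y"
    using bb y by (simp add: bij_betw_inv_into_right)
  ultimately show "(inv\<^bsub>BijGroup (words n)\<^esub> g) y ! k = y ! k"
    using assms(2) unfolding fixc_def by metis
qed

lemma fix_dep: "fixc n k g \<Longrightarrow> depj n k g"
  unfolding fixc_def depj_def by (rule exI[of _ id]) simp

lemma not_all_dep:
  assumes "card (UNIV :: 'a::finite set) \<ge> 2" "n \<ge> 2" "j < n"
  shows "\<exists>\<sigma>\<in>Bij (words n). \<not> depj n j (\<sigma> :: 'a list \<Rightarrow> 'a list)"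
proof -
  have "\<not> card (UNIV::'a set) \<le> Suc 0" using assms(1) by simp
  then obtain a b :: 'a where ab: "a \<noteq> b" by (auto simp: card_le_Suc0_iff_eq)
  define k where "k = (if j = 0 then 1 else 0::nat)"
  have k: "k < n" "k \<noteq> j" using assms unfolding k_def by auto
  define u where "u = replicate n a"
  define v where "v = replicate n b"
  define w where "w = (replicate n a)[k := b]"
  have uS: "u \<in> words n" and vS: "v \<in> words n" and wS: "w \<in> words n"
    unfolding u_def v_def w_def words_def by auto
  have uv: "u \<noteq> v" using ab assms(3) unfolding u_def v_def by simp
  have wk: "w ! k = b" "u ! k = a" "w ! j = a" "v ! j = b" "u ! j = a"
    using k assms(3) unfolding u_def v_def w_def by auto
  have wu: "w \<noteq> u" using ab wk by auto
  have wv: "w \<noteq> v" using ab wk by auto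
  define \<sigma> where "\<sigma> = (\<lambda>x\<in>words n. if x = u then v else if x = v then u else x)"
  have inS: "\<And>x. x \<in> words n \<Longrightarrow> \<sigma> x \<in> words n" using uS vS unfolding \<sigma>_def by auto
  have inv: "\<And>x. x \<in> words n \<Longrightarrow> \<sigma> (\<sigma> x) = x" using uS vS uv unfolding \<sigma>_def by auto
  have "bij_betw \<sigma> (words n) (words n)"
    by (rule bij_betwI[of _ _ _ \<sigma>]) (auto simp: inS inv)
  then have sB: "\<sigma> \<in> Bij (words n)" unfolding Bij_def \<sigma>_def by auto
  have "\<not> depj n j \<sigma>"
  proof
    assume "depj n j \<sigma>"
    then obtain \<phi> where p: "\<forall>x\<in>words n. \<sigma> x ! j = \<phi> (x ! j)" unfolding depj_def by auto
    have "\<sigma> u = v" "\<sigma> w = w" using uS wS wu wv unfolding \<sigma>_def by auto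
    moreover have "\<sigma> u ! j = \<phi> (u ! j)" "\<sigma> w ! j = \<phi> (w ! j)" using p uS wS by auto
    ultimately have "b = \<phi> a" "a = \<phi> a" using wk by auto
    then show False using ab by simp
  qed
  then show ?thesis using sB by blast
qed

theorem lemma6:
  fixes I :: "('a::finite list \<Rightarrow> 'a list) set" and n :: nat
  assumes "card (UNIV :: 'a set) \<ge> 2" and "n \<ge> 2"
    and "I \<subseteq> Bij (words n)"
    and "card I = n"
    and "\<forall>f\<in>I. instruction n f"
    and "generate (BijGroup (words n)) I = carrier (BijGroup (words n))"
  shows "\<forall>f\<in>I. \<not> unary_instruction n f"
proof (intro ballI notI)
  fix f assume fI: "f \<in> I" and "unary_instruction n f"
  then obtain j and h :: "'a \<Rightarrow> 'a" where j: "j < n" and hb: "bij h"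
    and fe: "\<forall>x\<in>words n. f x = x[j := h (x ! j)]"
    unfolding unary_instruction_def by auto
  have finI: "finite I"
  proof (rule ccontr)
    assume "infinite I" then have "card I = 0" by simp
    with assms(2,4) show False by simp
  qed
  have carr: "carrier (BijGroup (words n)) = Bij (words n)" by (simp add: BijGroup_def)
  have allgen: "\<forall>g\<in>Bij (words n :: 'a list set). depj n k g"
    if H: "\<forall>g\<in>I. depj n k g \<and> depj n k (inv\<^bsub>BijGroup (words n)\<^esub> g)" for k
  proof
    fix g :: "'a list \<Rightarrow> 'a list" assume "g \<in> Bij (words n)"
    then have "g \<in> generate (BijGroup (words n)) I" unfolding assms(6) carr by assumption
    then show "depj n k g" using gen_dep[OF assms(3) H] by simp
  qed
  define M where "M g = {k. k < n \<and> \<not> fixc n k g}" for g :: "'a list \<Rightarrow> 'a list"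
  have Mc: "card (M g) \<le> 1" if gI: "g \<in> I" for g
  proof -
    have "instruction n g" using assms(5) gI by blast
    then obtain c where "c < n" "\<forall>i<n. i \<noteq> c \<longrightarrow> (\<forall>x\<in>words n. g x ! i = x ! i)"
      unfolding instruction_def by blast
    then have "M g \<subseteq> {c}" unfolding M_def fixc_def by auto
    then show ?thesis using card_mono[of "{c}" "M g"] by simp
  qed
  have cover: "{..<n} \<subseteq> (\<Union>g\<in>I. M g)"
  proof
    fix k assume k: "k \<in> {..<n}"
    show "k \<in> (\<Union>g\<in>I. M g)"
    proof (rule ccontr)
      assume "k \<notin> (\<Union>g\<in>I. M g)"
      then have fx: "\<forall>g\<in>I. fixc n k g" using k unfolding M_def by auto
      have "\<forall>g\<in>I. depj n k g \<and> depj n k (inv\<^bsub>BijGroup (words n)\<^esub> g)"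
      proof
        fix g assume g: "g \<in> I"
        then have "fixc n k g" "g \<in> Bij (words n)" using fx assms(3) by auto
        then show "depj n k g \<and> depj n k (inv\<^bsub>BijGroup (words n)\<^esub> g)"
          using fix_dep inv_fix by blast
      qed
      then have "\<forall>g\<in>Bij (words n :: 'a list set). depj n k g" by (rule allgen)
      then show False using not_all_dep[OF assms(1,2), of k] k by auto
    qed
  qed
  have Mf: "M f \<subseteq> {j}"
  proof
    fix k assume kM: "k \<in> M f"
    show "k \<in> {j}"
    proof (rule ccontr)
      assume "k \<notin> {j}"
      then have "k \<noteq> j" by simp
      then have "fixc n k f" unfolding fixc_def using fe by simp
      then show False using kM unfolding M_def by simp
    qed
  qed
  have others: "fixc n j g" if gI: "g \<in> I" and gf: "g \<noteq> f" for g
  proof (rule ccontr)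
    assume "\<not> fixc n j g"
    then have jg: "j \<in> M g" using j unfolding M_def by auto
    have "M f \<subseteq> M g" using Mf jg by auto
    then have eq: "(\<Union>g\<in>I. M g) = (\<Union>g\<in>I-{f}. M g)" using gI gf by blast
    have "card (\<Union>g\<in>I-{f}. M g) \<le> (\<Sum>g\<in>I-{f}. card (M g))" using finI by (intro card_UN_le) auto
    also have "\<dots> \<le> (\<Sum>g\<in>I-{f}. 1)" using Mc by (intro sum_mono) auto
    also have "\<dots> = n - 1" using assms(4) fI finI by simp
    finally have c1: "card (\<Union>g\<in>I. M g) \<le> n - 1" using eq by simp
    have fU: "finite (\<Union>g\<in>I. M g)" using finI unfolding M_def by auto
    have "card {..<n} \<le> card (\<Union>g\<in>I. M g)" by (rule card_mono[OF fU cover])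
    then have "n \<le> card (\<Union>g\<in>I. M g)" by simp
    with c1 assms(2) show False by linarith
  qed
  have fB: "f \<in> Bij (words n)" using fI assms(3) by auto
  have df: "depj n j f"
    unfolding depj_def
  proof (intro exI[of _ h] ballI)
    fix x :: "'a list" assume x: "x \<in> words n"
    then have "length x = n" by (simp add: words_def)
    then show "f x ! j = h (x ! j)" using fe x j by simp
  qed
  have dfi: "depj n j (inv\<^bsub>BijGroup (words n)\<^esub> f)"
    unfolding depj_def
  proof (intro exI[of _ "inv_into UNIV h"] ballI)
    fix y :: "'a list" assume y: "y \<in> words n"
    have bb: "bij_betw f (words n) (words n)" using fB by (simp add: Bij_def)
    let ?x = "inv_into (words n) f y"
    have e: "(inv\<^bsub>BijGroup (words n)\<^esub> f) y = ?x"
      using fB y by (simp add: inv_BijGroup)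
    have xS: "?x \<in> words n" using fB y by (simp add: Bij_inv_into_mem)
    then have lx: "length ?x = n" by (simp add: words_def)
    have "f ?x = y" using bb y by (simp add: bij_betw_inv_into_right)
    then have "f ?x ! j = y ! j" by simp
    moreover have "f ?x ! j = h (?x ! j)" using fe xS j lx by simp
    ultimately have "y ! j = h (?x ! j)" by simp
    then show "(inv\<^bsub>BijGroup (words n)\<^esub> f) y ! j = inv_into UNIV h (y ! j)"
      using e hb by (simp add: bij_is_inj)
  qed
  have "\<forall>g\<in>I. depj n j g \<and> depj n j (inv\<^bsub>BijGroup (words n)\<^esub> g)"
  proof
    fix g assume g: "g \<in> I"
    show "depj n j g \<and> depj n j (inv\<^bsub>BijGroup (words n)\<^esub> g)"
    proof (cases "g = f")
      case True then show ?thesis using df dfi by simp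
    next
      case False
      then have "fixc n j g" "g \<in> Bij (words n)" using others g assms(3) by auto
      then show ?thesis using fix_dep inv_fix by blast
    qed
  qed
  then have "\<forall>g\<in>Bij (words n :: 'a list set). depj n j g" by (rule allgen)
  then show False using not_all_dep[OF assms(1,2) j] by auto
qed

end
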